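(* Let $\mathcal H$ be a two-dimensional real Hilbert space, $k\ge 2$, and let $T\in\mathcal L_s(^k\mathcal H)$ have norm one and attain its norm at $(\mathbf{x}_1,\ldots,\mathbf{x}_k)$, where $\mathbf{x}_1,\ldots,\mathbf{x}_k$ are norm one vectors with $\operatorname{span}\{\mathbf{x}_1,\ldots,\mathbf{x}_k\}=\mathcal H$. Then $T$ is an exposed point of the unit ball of $\mathcal L_s(^k\mathcal H)$.
   Context: $\mathcal L_s(^k\mathcal H)$ is the Banach space of symmetric $k$-linear forms on $\mathcal H$ with norm $\|T\|=\sup\{|T(\mathbf{w}_1,\ldots,\mathbf{w}_k)|:\|\mathbf{w}_i\|\le1\}$. $T$ attains its norm at $(\mathbf{x}_1,\ldots,\mathbf{x}_k)$ if $|T(\mathbf{x}_1,\ldots,\mathbf{x}_k)|=\|T\|$. A point $T$ of the unit ball $B$ of a Banach space $X$ is exposed if there is a continuous linear functional $\varphi$ on $X$ with $\varphi(T)>\varphi(S)$ for all $S\in B\setminus\{T\}$ (equivalently, $\varphi$ attains its maximum over $B$ only at $T$). *)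

theory Defs
  imports "HOL-Analysis.Analysis"
begin

text \<open>A k-linear form on a real inner product space 'a is represented as a function
  T :: (nat \<Rightarrow> 'a) \<Rightarrow> real acting on k-tuples (w 0, ..., w (k-1)); T only depends on
  the entries with index < k, and is linear in each of these entries.\<close>

definition multilinear_form :: "nat \<Rightarrow> ((nat \<Rightarrow> 'a::real_vector) \<Rightarrow> real) \<Rightarrow> bool" where
  "multilinear_form k T \<longleftrightarrow>
     (\<forall>w. T w = T (\<lambda>i. if i < k then w i else 0)) \<and>
     (\<forall>i<k. \<forall>w. linear (\<lambda>x. T (w(i := x))))"

definition symmetric_form :: "nat \<Rightarrow> ((nat \<Rightarrow> 'a::real_vector) \<Rightarrow> real) \<Rightarrow> bool" where
  "symmetric_form k T \<longleftrightarrow>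
     multilinear_form k T \<and> (\<forall>p w. p permutes {..<k} \<longrightarrow> T (w \<circ> p) = T w)"

definition Ls :: "nat \<Rightarrow> ((nat \<Rightarrow> 'a::real_normed_vector) \<Rightarrow> real) set" where
  "Ls k = {T. symmetric_form k T}"

definition form_norm :: "nat \<Rightarrow> ((nat \<Rightarrow> 'a::real_normed_vector) \<Rightarrow> real) \<Rightarrow> real" where
  "form_norm k T = Sup {\<bar>T w\<bar> | w. \<forall>i<k. norm (w i) \<le> 1}"

definition attains_norm_at ::
    "nat \<Rightarrow> ((nat \<Rightarrow> 'a::real_normed_vector) \<Rightarrow> real) \<Rightarrow> (nat \<Rightarrow> 'a) \<Rightarrow> bool" where
  "attains_norm_at k T x \<longleftrightarrow> \<bar>T x\<bar> = form_norm k T"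

definition Ls_ball :: "nat \<Rightarrow> ((nat \<Rightarrow> 'a::real_normed_vector) \<Rightarrow> real) set" where
  "Ls_ball k = {S \<in> Ls k. form_norm k S \<le> 1}"

definition cont_lin_functional ::
    "nat \<Rightarrow> (((nat \<Rightarrow> 'a::real_normed_vector) \<Rightarrow> real) \<Rightarrow> real) \<Rightarrow> bool" where
  "cont_lin_functional k \<phi> \<longleftrightarrow>
     (\<forall>S\<in>Ls k. \<forall>R\<in>Ls k. \<forall>a b::real.
        \<phi> (\<lambda>w. a * S w + b * R w) = a * \<phi> S + b * \<phi> R) \<and>
     (\<exists>C. \<forall>S\<in>Ls k. \<bar>\<phi> S\<bar> \<le> C * form_norm k S)"

definition exposed_point_Ls_ball ::
    "nat \<Rightarrow> ((nat \<Rightarrow> 'a::real_normed_vector) \<Rightarrow> real) \<Rightarrow> bool" where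
  "exposed_point_Ls_ball k T \<longleftrightarrow> T \<in> Ls_ball k \<and>
     (\<exists>\<phi>. cont_lin_functional k \<phi> \<and> (\<forall>S\<in>Ls_ball k. S \<noteq> T \<longrightarrow> \<phi> S < \<phi> T))"

end

theory Submission
  imports Defs
begin


lemma exists_unit_avoid:
  fixes B :: "complex set"
  assumes "finite B"
  shows "\<exists>u. cmod u = 1 \<and> u \<notin> B"
proof -
  let ?f = "\<lambda>c::real. Complex c (sqrt (1 - c\<^sup>2))"
  have inj: "inj_on ?f {0..1}" by (auto intro!: inj_onI)
  have "infinite (?f ` {0..1})"
    using inj by (simp add: finite_image_iff)
  then obtain u where "u \<in> ?f ` {0..1}" "u \<notin> B"
    using assms by (meson finite_subset subsetI)
  then obtain c where c: "c \<in> {0..1}" "u = ?f c" by auto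
  have "c\<^sup>2 \<le> 1" using c by (simp add: power_le_one)
  then have "cmod u = 1" using c by (simp add: complex_norm)
  then show ?thesis using \<open>u \<notin> B\<close> by blast
qed

lemma lin_C:
  fixes f :: "complex \<Rightarrow> real"
  assumes "linear f"
  shows "f u = Re u * f 1 + Im u * f \<i>"
proof -
  have "u = Re u *\<^sub>R 1 + Im u *\<^sub>R \<i>"
    by (simp add: complex_eq_iff)
  then have "f u = f (Re u *\<^sub>R 1 + Im u *\<^sub>R \<i>)" by simp
  also have "\<dots> = Re u * f 1 + Im u * f \<i>"
    using assms by (simp add: linear_add linear_scale)
  finally show ?thesis .
qed

lemma ml_dep:
  assumes "multilinear_form k M" "\<forall>i<k. y i = z i"
  shows "M y = M z"
proof -
  have "M y = M (\<lambda>i. if i < k then y i else 0)" using assms(1) unfolding multilinear_form_def by blast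
  also have "\<dots> = M (\<lambda>i. if i < k then z i else 0)" using assms(2) by (metis)
  also have "\<dots> = M z" using assms(1) unfolding multilinear_form_def by metis
  finally show ?thesis .
qed

lemma ml_lin:
  assumes "multilinear_form k M" "i < k"
  shows "linear (\<lambda>x. M (w(i := x)))"
  using assms unfolding multilinear_form_def by blast

lemma sym_swap:
  assumes "symmetric_form k M" "i < k" "j < k" "i \<noteq> j"
  shows "M (w(i := u, j := v)) = M (w(i := v, j := u))"
proof -
  have p: "Transposition.transpose i j permutes {..<k}" using assms by (intro permutes_swap_id) auto
  have "(w(i := u, j := v)) \<circ> Transposition.transpose i j = w(i := v, j := u)"
    using assms(4) by (auto simp: fun_eq_iff Transposition.transpose_def)
  then show ?thesis using assms(1) p unfolding symmetric_form_def by metis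
qed



lemma L1:
  fixes N :: "(nat \<Rightarrow> complex) \<Rightarrow> real"
  assumes ml: "multilinear_form k N"
    and bnd: "\<And>w. (\<forall>i<k. cmod (w i) \<le> 1) \<Longrightarrow> \<bar>N w\<bar> \<le> 1"
    and yu: "\<forall>i<k. cmod (y i) = 1" and Ny: "N y = 1" and ik: "i < k"
  shows "N (y(i := u)) = Re (cnj (y i) * u)"
proof -
  define f where "f = (\<lambda>x. N (y(i := x)))"
  have lin: "linear f" unfolding f_def using ml_lin[OF ml ik] .
  have fb: "\<bar>f z\<bar> \<le> 1" if "cmod z \<le> 1" for z
    unfolding f_def using that yu by (intro bnd) auto
  define \<alpha> where "\<alpha> = f 1"
  define \<beta> where "\<beta> = f \<i>"
  have fe: "f z = Re z * \<alpha> + Im z * \<beta>" for z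
    unfolding \<alpha>_def \<beta>_def by (rule lin_C[OF lin])
  have ab: "\<alpha>\<^sup>2 + \<beta>\<^sup>2 \<le> 1"
  proof (cases "\<alpha>\<^sup>2 + \<beta>\<^sup>2 = 0")
    case True then show ?thesis by simp
  next
    case False
    define s where "s = sqrt (\<alpha>\<^sup>2 + \<beta>\<^sup>2)"
    have s0: "s > 0" using False unfolding s_def
      by (simp add: add_nonneg_nonneg less_le)
    have ss: "s * s = \<alpha>\<^sup>2 + \<beta>\<^sup>2" unfolding s_def
      by (simp add: add_nonneg_nonneg)
    let ?z = "Complex (\<alpha> / s) (\<beta> / s)"
    have s2: "s\<^sup>2 = \<alpha>\<^sup>2 + \<beta>\<^sup>2" using ss by (simp add: power2_eq_square)
    have "cmod ?z = sqrt ((\<alpha>\<^sup>2 + \<beta>\<^sup>2) / s\<^sup>2)"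
      by (simp add: complex_norm power_divide add_divide_distrib)
    also have "\<dots> = 1" using s2 False by simp
    finally have A1: "\<bar>f ?z\<bar> \<le> 1" by (intro fb) simp
    have "f ?z = (\<alpha>*\<alpha> + \<beta>*\<beta>) / s" using fe[of ?z] s0
      by (simp add: add_divide_distrib)
    then have "f ?z = s" using ss s0 by (metis nonzero_mult_div_cancel_left less_irrefl power2_eq_square)
    with A1 have "s \<le> 1" by simp
    then have "s * s \<le> 1" using s0 by (simp add: mult_le_one)
    then show ?thesis using ss by simp
  qed
  have "f (y i) = 1" unfolding f_def using Ny by simp
  then have e1: "Re (y i) * \<alpha> + Im (y i) * \<beta> = 1" using fe by simp
  have e2: "(Re (y i))\<^sup>2 + (Im (y i))\<^sup>2 = 1"
    using yu ik by (metis cmod_power2 one_power2)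
  have "(\<alpha> - Re (y i))\<^sup>2 + (\<beta> - Im (y i))\<^sup>2 \<le> 0"
    using ab e1 e2 by (simp add: power2_diff algebra_simps)
  then have "\<alpha> = Re (y i)" "\<beta> = Im (y i)"
    by (smt (verit) zero_le_power2 power_eq_0_iff)+
  then show ?thesis using fe[of u] unfolding f_def by (simp add: mult.commute)
qed

lemma det_nz:
  fixes p q :: complex
  assumes "cmod p = 1" "cmod q = 1" "p \<noteq> q" "p \<noteq> - q"
  shows "Re p * Im q - Im p * Re q \<noteq> 0"
proof
  assume d: "Re p * Im q - Im p * Re q = 0"
  have hp: "(Re p)\<^sup>2 + (Im p)\<^sup>2 = 1" using assms(1) by (metis cmod_power2 one_power2)
  have hq: "(Re q)\<^sup>2 + (Im q)\<^sup>2 = 1" using assms(2) by (metis cmod_power2 one_power2)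
  have c: "(Re p * Re q + Im p * Im q)\<^sup>2 = 1" using hp hq d by algebra
  then have "Re p * Re q + Im p * Im q = 1 \<or> Re p * Re q + Im p * Im q = -1"
    by (simp add: power2_eq_1_iff)
  then show False
  proof
    assume h: "Re p * Re q + Im p * Im q = 1"
    have "(Re p - Re q)\<^sup>2 + (Im p - Im q)\<^sup>2 = 0" using hp hq h by algebra
    then have "Re p = Re q" "Im p = Im q" by (smt (verit) zero_le_power2 power_eq_0_iff)+
    then show False using assms(3) by (simp add: complex_eq_iff)
  next
    assume h: "Re p * Re q + Im p * Im q = -1"
    have "(Re p + Re q)\<^sup>2 + (Im p + Im q)\<^sup>2 = 0" using hp hq h by algebra
    then have "Re p = - Re q" "Im p = - Im q" by (smt (verit) zero_le_power2 power_eq_0_iff)+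
    then show False using assms(4) by (simp add: complex_eq_iff)
  qed
qed

lemma L2:
  fixes N :: "(nat \<Rightarrow> complex) \<Rightarrow> real"
  assumes sf: "symmetric_form k N"
    and bnd: "\<And>w. (\<forall>i<k. cmod (w i) \<le> 1) \<Longrightarrow> \<bar>N w\<bar> \<le> 1"
    and yu: "\<forall>i<k. cmod (y i) = 1" and Ny: "N y = 1" and ik: "i < k" and jk: "j < k"
    and ij: "i \<noteq> j" and ne1: "y i \<noteq> y j" and ne2: "y i \<noteq> - y j"
  shows "N (y(i := u, j := v)) = Re (cnj (y i * y j) * u * v)"
proof -
  have ml: "multilinear_form k N" using sf unfolding symmetric_form_def by blast
  define B where "B = (\<lambda>u v. N (y(i := u, j := v)))"
  have hB1: "B u v = Re u * B 1 v + Im u * B \<i> v" for u v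
  proof -
    have e: "\<And>z. B z v = N ((y(j := v))(i := z))" unfolding B_def using ij by (simp add: fun_upd_twist)
    show ?thesis unfolding e by (rule lin_C[OF ml_lin[OF ml ik]])
  qed
  have hB2: "B c v = Re v * B c 1 + Im v * B c \<i>" for c v
    unfolding B_def by (rule lin_C[OF ml_lin[OF ml jk]])
  have hs: "B \<i> 1 = B 1 \<i>" unfolding B_def by (rule sym_swap[OF sf ik jk ij])
  define p where "p = y i"
  define q where "q = y j"
  have pu: "cmod p = 1" and qu: "cmod q = 1" using yu ik jk unfolding p_def q_def by auto
  have hp: "(Re p)\<^sup>2 + (Im p)\<^sup>2 = 1" using pu by (metis cmod_power2 one_power2)
  have hq: "(Re q)\<^sup>2 + (Im q)\<^sup>2 = 1" using qu by (metis cmod_power2 one_power2)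
  have dnz: "Re p * Im q - Im p * Re q \<noteq> 0" using det_nz[OF pu qu] ne1 ne2 unfolding p_def q_def by auto
  have Li: "B u q = Re (cnj p * u)" for u
  proof -
    have "y(i := u, j := q) = y(i := u)" unfolding q_def using ij by (auto simp: fun_eq_iff)
    then show ?thesis unfolding B_def p_def using L1[OF ml bnd yu Ny ik, of u] by (simp only:)
  qed
  have Lj: "B p v = Re (cnj q * v)" for v
  proof -
    have "y(i := p, j := v) = y(j := v)" unfolding p_def using ij by (auto simp: fun_eq_iff)
    then show ?thesis unfolding B_def q_def using L1[OF ml bnd yu Ny jk, of v] by (simp only:)
  qed
  define B11 where "B11 = B 1 1"
  define B12 where "B12 = B 1 \<i>"
  define B22 where "B22 = B \<i> \<i>"
  have Bexp: "B u v = Re u * (Re v * B11 + Im v * B12) + Im u * (Re v * B12 + Im v * B22)" for u v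
    using hB1[of u v] hB2[of 1 v] hB2[of \<i> v] hs unfolding B11_def B12_def B22_def by simp
  have e1: "Re q * B11 + Im q * B12 = Re p" using Li[of 1] Bexp[of 1 q] by simp
  have e2: "Re q * B12 + Im q * B22 = Im p" using Li[of \<i>] Bexp[of \<i> q] by simp
  have e3: "Re p * B11 + Im p * B12 = Re q" using Lj[of 1] Bexp[of p 1] by (simp add: algebra_simps)
  have e4: "Re p * B12 + Im p * B22 = Im q" using Lj[of \<i>] Bexp[of p \<i>] by (simp add: algebra_simps)
  define d where "d = Re p * Im q - Im p * Re q"
  obtain p1 p2 q1 q2 where pq: "p1 = Re p" "p2 = Im p" "q1 = Re q" "q2 = Im q" by blast
  have hp': "p1*p1 + p2*p2 = 1" and hq': "q1*q1+q2*q2 = 1" using hp hq pq by (simp_all add: power2_eq_square)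
  have dnz': "p1 * q2 - p2 * q1 \<noteq> 0" using dnz pq by simp
  have e1': "q1 * B11 + q2 * B12 = p1" and e2': "q1 * B12 + q2 * B22 = p2"
    and e3': "p1 * B11 + p2 * B12 = q1" and e4': "p1 * B12 + p2 * B22 = q2" using e1 e2 e3 e4 pq by simp_all
  have "B11 * (p1 * q2 - p2 * q1) = q2 * (p1 * B11 + p2 * B12) - p2 * (q1 * B11 + q2 * B12)"
    by (simp add: algebra_simps)
  also have "\<dots> = q1 * q2 - p1 * p2" using e1' e3' by (simp add: algebra_simps)
  also have "\<dots> = (p1 * q1 - p2 * q2) * (p1 * q2 - p2 * q1)" using hp' hq' by algebra
  finally have b11: "B11 = Re p * Re q - Im p * Im q" using dnz' pq by simp
  have "B12 * (p1 * q2 - p2 * q1) = p1 * (q1 * B11 + q2 * B12) - q1 * (p1 * B11 + p2 * B12)"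
    by (simp add: algebra_simps)
  also have "\<dots> = p1 * p1 - q1 * q1" using e1' e3' by (simp add: algebra_simps)
  also have "\<dots> = (p1 * q2 + p2 * q1) * (p1 * q2 - p2 * q1)" using hp' hq' by algebra
  finally have b12: "B12 = Re p * Im q + Im p * Re q" using dnz' pq by simp
  have "B22 * (p1 * q2 - p2 * q1) = p1 * (q1 * B12 + q2 * B22) - q1 * (p1 * B12 + p2 * B22)"
    by (simp add: algebra_simps)
  also have "\<dots> = p1 * p2 - q1 * q2" using e2' e4' by (simp add: algebra_simps)
  also have "\<dots> = (p2 * q2 - p1 * q1) * (p1 * q2 - p2 * q1)" using hp' hq' by algebra
  finally have b22: "B22 = Im p * Im q - Re p * Re q" using dnz' pq by simp
  have "N (y(i := u, j := v)) = B u v" unfolding B_def by simp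
  also have "\<dots> = Re (cnj (p * q) * u * v)" unfolding Bexp b11 b12 b22
    by (simp add: algebra_simps)
  finally show ?thesis unfolding p_def q_def .
qed



lemma re_cnj_unit: "cmod w = 1 \<Longrightarrow> Re (cnj w * w) = 1"
proof -
  assume "cmod w = 1"
  then have "(Re w)\<^sup>2 + (Im w)\<^sup>2 = 1" by (metis cmod_power2 one_power2)
  then show ?thesis by (simp add: power2_eq_square)
qed

lemma sq_roots:
  fixes u t :: complex
  assumes "u * u = t" shows "u = csqrt t \<or> u = - csqrt t"
proof -
  have "(u - csqrt t) * (u + csqrt t) = 0"
    using assms power2_csqrt[of t] by (simp add: algebra_simps power2_eq_square)
  then show ?thesis by (auto simp: eq_neg_iff_add_eq_0)
qed

lemma prod_split2:
  assumes "finite A" "i \<in> A" "j \<in> A" "i \<noteq> j"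
  shows "prod f A = f i * f j * prod f (A - {i, j})"
proof -
  have "prod f A = f i * prod f (A - {i})" using assms by (simp add: prod.remove)
  also have "prod f (A - {i}) = f j * prod f (A - {i} - {j})" using assms by (simp add: prod.remove)
  also have "A - {i} - {j} = A - {i, j}" by auto
  finally show ?thesis by (simp add: mult.assoc)
qed

lemma prod_split3:
  assumes "finite A" "i \<in> A" "j \<in> A" "l \<in> A" "i \<noteq> j" "l \<noteq> i" "l \<noteq> j"
  shows "prod f A = f i * f j * f l * prod f (A - {i, j, l})"
proof -
  have "prod f A = f i * f j * prod f (A - {i, j})" using assms by (intro prod_split2) auto
  also have "prod f (A - {i, j}) = f l * prod f (A - {i, j} - {l})" using assms by (simp add: prod.remove)
  also have "A - {i, j} - {l} = A - {i, j, l}" by auto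
  finally show ?thesis by (simp add: mult.assoc)
qed

lemma reach:
  fixes N :: "(nat \<Rightarrow> complex) \<Rightarrow> real"
  assumes sf: "symmetric_form k N"
    and bnd: "\<And>w. (\<forall>i<k. cmod (w i) \<le> 1) \<Longrightarrow> \<bar>N w\<bar> \<le> 1"
    and xu: "\<forall>i<k. cmod (x i) = 1" and Nx: "N x = 1" and ak: "a < k" and bk: "b < k"
    and ab: "a \<noteq> b" and n1: "x a \<noteq> x b" and n2: "x a \<noteq> - x b"
  shows "finite L \<Longrightarrow> L \<subseteq> {..<k} - {a, b} \<Longrightarrow>
    \<forall>y. (\<forall>i<k. cmod (y i) = 1) \<longrightarrow> (\<forall>i<k. i \<notin> L \<longrightarrow> i \<noteq> a \<longrightarrow> i \<noteq> b \<longrightarrow> y i = x i)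
      \<longrightarrow> (\<Prod>i<k. y i) = (\<Prod>i<k. x i) \<longrightarrow> N y = 1"
proof (induction L rule: finite_induct)
  case empty
  have ml: "multilinear_form k N" using sf unfolding symmetric_form_def by blast
  show ?case
  proof (intro allI impI)
    fix y assume yu: "\<forall>i<k. cmod (y i) = 1"
      and ya: "\<forall>i<k. i \<notin> {} \<longrightarrow> i \<noteq> a \<longrightarrow> i \<noteq> b \<longrightarrow> y i = x i"
      and yp: "(\<Prod>i<k. y i) = (\<Prod>i<k. x i)"
    let ?R = "{..<k} - {a, b}"
    have r: "prod y ?R = prod x ?R" using ya by (intro prod.cong) auto
    have nz: "prod x ?R \<noteq> 0" using xu by (auto simp: prod_zero_iff)
    have "y a * y b * prod x ?R = x a * x b * prod x ?R"
      using yp prod_split2[of "{..<k}" a b y] prod_split2[of "{..<k}" a b x] ak bk ab r by simp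
    then have yy: "y a * y b = x a * x b" using nz by simp
    have "N y = N (x(a := y a, b := y b))" using ya by (intro ml_dep[OF ml]) auto
    also have "\<dots> = Re (cnj (x a * x b) * y a * y b)"
      by (rule L2[OF sf bnd xu Nx ak bk ab n1 n2])
    also have "\<dots> = Re (cnj (x a * x b) * (x a * x b))" using yy by (simp add: mult.assoc)
    also have "\<dots> = 1" using xu ak bk by (intro re_cnj_unit) (simp add: norm_mult)
    finally show "N y = 1" .
  qed
next
  case (insert l L)
  have ml: "multilinear_form k N" using sf unfolding symmetric_form_def by blast
  have lk: "l < k" and la: "l \<noteq> a" and lb: "l \<noteq> b" and LL: "L \<subseteq> {..<k} - {a, b}"
    using insert.prems by auto
  show ?case
  proof (intro allI impI)
    fix y assume yu: "\<forall>i<k. cmod (y i) = 1"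
      and ya: "\<forall>i<k. i \<notin> insert l L \<longrightarrow> i \<noteq> a \<longrightarrow> i \<noteq> b \<longrightarrow> y i = x i"
      and yp: "(\<Prod>i<k. y i) = (\<Prod>i<k. x i)"
    have yl0: "y l \<noteq> 0" and xl0: "x l \<noteq> 0" using yu xu lk by auto
    obtain u where uu: "cmod u = 1" and
      uB: "u \<notin> {x l * x l / y l, - (x l * x l) / y l, csqrt (y a * y b), - csqrt (y a * y b),
                  csqrt (- (y a * y b)), - csqrt (- (y a * y b))}"
      using exists_unit_avoid by (meson finite.emptyI finite.insertI)
    have u0: "u \<noteq> 0" using uu by auto
    have c1: "u * y l \<noteq> x l * x l" using uB yl0 by (auto simp: field_simps)
    have c2: "u * y l \<noteq> - (x l * x l)" using uB yl0 by (auto simp: field_simps)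
    have c3: "u * u \<noteq> y a * y b" using uB sq_roots by blast
    have c4: "u * u \<noteq> - (y a * y b)" using uB sq_roots by blast
    define a' where "a' = u * y l / x l"
    define b' where "b' = y a * y b / u"
    define y' where "y' = y(l := x l, a := a', b := b')"
    have a'u: "cmod a' = 1" unfolding a'_def using uu yu xu lk by (simp add: norm_mult norm_divide)
    have b'u: "cmod b' = 1" unfolding b'_def using uu yu ak bk by (simp add: norm_mult norm_divide)
    have y'u: "\<forall>i<k. cmod (y' i) = 1" unfolding y'_def using yu xu a'u b'u lk by auto
    have y'a: "\<forall>i<k. i \<notin> L \<longrightarrow> i \<noteq> a \<longrightarrow> i \<noteq> b \<longrightarrow> y' i = x i"
      unfolding y'_def using ya by auto
    let ?R = "{..<k} - {a, b, l}"
    have r: "prod y' ?R = prod y ?R" unfolding y'_def by (intro prod.cong) auto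
    have "(\<Prod>i<k. y' i) = y' a * y' b * y' l * prod y' ?R"
      using prod_split3[of "{..<k}" a b l y'] ak bk lk ab la lb by auto
    also have "y' a * y' b * y' l = y a * y b * y l"
      unfolding y'_def a'_def b'_def using ab la lb u0 xl0 by (simp add: field_simps)
    also have "y a * y b * y l * prod y' ?R = (\<Prod>i<k. y i)"
      using prod_split3[of "{..<k}" a b l y] ak bk lk ab la lb r by auto
    finally have y'p: "(\<Prod>i<k. y' i) = (\<Prod>i<k. x i)" using yp by simp
    have Ny': "N y' = 1" using insert.IH LL y'u y'a y'p by blast
    have ya': "y' a = a'" and yl': "y' l = x l" and yb': "y' b = b'"
      unfolding y'_def using ab la lb by auto
    have d1: "a' \<noteq> x l" unfolding a'_def using c1 xl0 by (auto simp: field_simps)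
    have d2: "a' \<noteq> - x l" unfolding a'_def using c2 xl0 by (auto simp: field_simps)
    define y'' where "y'' = y(a := u, b := b')"
    have e'': "y'(a := u, l := y l) = y''" unfolding y'_def y''_def using ab la lb
      by (auto simp: fun_eq_iff)
    have "N y'' = Re (cnj (a' * x l) * u * y l)"
      using L2[OF sf bnd y'u Ny' ak lk la[symmetric], of u "y l"] ya' yl' d1 d2 e'' by simp
    also have "a' * x l = u * y l" unfolding a'_def using xl0 by simp
    also have "Re (cnj (u * y l) * u * y l) = Re (cnj (u * y l) * (u * y l))" by (simp add: mult.assoc)
    also have "\<dots> = 1" using uu yu lk by (intro re_cnj_unit) (simp add: norm_mult)
    finally have Ny'': "N y'' = 1" .
    have y''u: "\<forall>i<k. cmod (y'' i) = 1" unfolding y''_def using yu uu b'u by auto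
    have f1: "y'' a \<noteq> y'' b" unfolding y''_def b'_def using ab c3 u0 by (auto simp: field_simps)
    have f2: "y'' a \<noteq> - y'' b" unfolding y''_def b'_def using ab c4 u0 by (auto simp: field_simps)
    have e3: "y''(a := y a, b := y b) = y" unfolding y''_def by (auto simp: fun_eq_iff)
    have "N y = Re (cnj (y'' a * y'' b) * y a * y b)"
      using L2[OF sf bnd y''u Ny'' ak bk ab f1 f2, of "y a" "y b"] e3 by simp
    also have "y'' a * y'' b = y a * y b" unfolding y''_def b'_def using ab u0 by simp
    also have "Re (cnj (y a * y b) * y a * y b) = Re (cnj (y a * y b) * (y a * y b))" by (simp add: mult.assoc)
    also have "\<dots> = 1" using yu ak bk by (intro re_cnj_unit) (simp add: norm_mult)
    finally show "N y = 1" .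
  qed
qed



lemma unit_prod: "\<forall>i\<in>A. cmod (f i) = 1 \<Longrightarrow> cmod (prod f A) = 1"
  by (metis (mono_tags, lifting) prod.neutral prod_norm)

lemma formula_unit:
  fixes N :: "(nat \<Rightarrow> complex) \<Rightarrow> real"
  assumes sf: "symmetric_form k N"
    and bnd: "\<And>w. (\<forall>i<k. cmod (w i) \<le> 1) \<Longrightarrow> \<bar>N w\<bar> \<le> 1"
    and xu: "\<forall>i<k. cmod (x i) = 1" and Nx: "N x = 1" and ak: "a < k" and bk: "b < k"
    and ab: "a \<noteq> b" and n1: "x a \<noteq> x b" and n2: "x a \<noteq> - x b"
    and wu: "\<forall>i<k. cmod (w i) = 1"
  shows "N w = Re (cnj (\<Prod>i<k. x i) * (\<Prod>i<k. w i))"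
proof -
  have ml: "multilinear_form k N" using sf unfolding symmetric_form_def by blast
  have all: "\<And>y. \<forall>i<k. cmod (y i) = 1 \<Longrightarrow> (\<Prod>i<k. y i) = (\<Prod>i<k. x i) \<Longrightarrow> N y = 1"
    using reach[OF sf bnd xu Nx ak bk ab n1 n2, of "{..<k} - {a, b}"] by auto
  have k0: "0 < k" using ak by simp
  define p where "p = (\<Prod>i<k. x i)"
  define R where "R = prod w ({..<k} - {0})"
  have pu: "cmod p = 1" unfolding p_def using xu by (intro unit_prod) auto
  have Ru: "cmod R = 1" unfolding R_def using wu by (intro unit_prod) auto
  have R0: "R \<noteq> 0" using Ru by auto
  define y0 where "y0 = p / R"
  define y where "y = w(0 := y0)"
  have y0u: "cmod y0 = 1" unfolding y0_def using pu Ru by (simp add: norm_divide)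
  have yu: "\<forall>i<k. cmod (y i) = 1" unfolding y_def using wu y0u by auto
  have "(\<Prod>i<k. y i) = y 0 * prod y ({..<k} - {0})" using k0 by (simp add: prod.remove)
  also have "prod y ({..<k} - {0}) = R" unfolding R_def y_def by (intro prod.cong) auto
  finally have "(\<Prod>i<k. y i) = p" unfolding y_def y0_def using R0 by simp
  then have Ny: "N y = 1" using all yu unfolding p_def by blast
  have "y(0 := w 0) = w" unfolding y_def by (auto simp: fun_eq_iff)
  then have "N w = N (y(0 := w 0))" by simp
  also have "\<dots> = Re (cnj (y 0) * w 0)" by (rule L1[OF ml bnd yu Ny k0])
  also have "y 0 = y0" unfolding y_def by simp
  also have "cnj y0 = cnj p * R"
  proof -
    have "R * cnj R = 1" using Ru complex_norm_square[of R] by simp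
    then show ?thesis unfolding y0_def using R0 by (simp add: field_simps)
  qed
  also have "cnj p * R * w 0 = cnj p * (\<Prod>i<k. w i)"
    unfolding R_def using k0 by (simp add: prod.remove mult.commute mult.left_commute)
  finally show ?thesis unfolding p_def .
qed

lemma ml_ext:
  fixes M1 M2 :: "(nat \<Rightarrow> 'b::real_normed_vector) \<Rightarrow> real" and w :: "nat \<Rightarrow> 'b"
  assumes l1: "\<forall>i<k. \<forall>w. linear (\<lambda>x. M1 (w(i := x)))"
    and l2: "\<forall>i<k. \<forall>w. linear (\<lambda>x. M2 (w(i := x)))"
    and eq: "\<And>v. \<forall>i<k. norm (v i) = 1 \<Longrightarrow> M1 v = M2 v"
  shows "M1 w = M2 w"
proof -
  have "finite J \<Longrightarrow> \<forall>w. (\<forall>i<k. i \<notin> J \<longrightarrow> norm (w i) = 1) \<longrightarrow> M1 w = M2 w" for J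
  proof (induction J rule: finite_induct)
    case empty then show ?case using eq by auto
  next
    case (insert j J)
    show ?case
    proof (intro allI impI)
      fix w :: "nat \<Rightarrow> 'b" assume wu: "\<forall>i<k. i \<notin> insert j J \<longrightarrow> norm (w i) = 1"
      show "M1 w = M2 w"
      proof (cases "j < k")
        case False
        then have "\<forall>i<k. i \<notin> J \<longrightarrow> norm (w i) = 1" using wu by auto
        then show ?thesis using insert.IH by blast
      next
        case True
        define c where "c = w j"
        define w' where "w' = w(j := c /\<^sub>R norm c)"
        show ?thesis
        proof (cases "c = 0")
          case True
          have "M1 w = M1 (w(j := 0))" "M2 w = M2 (w(j := 0))" using True unfolding c_def by (metis fun_upd_triv)+
          moreover have "M1 (w(j := 0)) = 0" using l1 \<open>j < k\<close> linear_0 by blast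
          moreover have "M2 (w(j := 0)) = 0" using l2 \<open>j < k\<close> linear_0 by blast
          ultimately show ?thesis by simp
        next
          case False
          have w'u: "\<forall>i<k. i \<notin> J \<longrightarrow> norm (w' i) = 1" unfolding w'_def using wu False by auto
          define d where "d = c /\<^sub>R norm c"
          have ww: "w = w'(j := norm c *\<^sub>R d)" unfolding w'_def c_def d_def using False
            by (auto simp: fun_eq_iff c_def)
          have "M1 w = norm c * M1 (w'(j := d))"
            using ww linear_scale[OF l1[rule_format, OF \<open>j < k\<close>, of w'], of "norm c" d] by simp
          moreover have "M2 w = norm c * M2 (w'(j := d))"
            using ww linear_scale[OF l2[rule_format, OF \<open>j < k\<close>, of w'], of "norm c" d] by simp
          moreover have "w'(j := d) = w'" unfolding w'_def d_def by simp
          ultimately show ?thesis using insert.IH w'u by simp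
        qed
      qed
    qed
  qed
  from this[of "{..<k}"] show ?thesis by auto
qed

lemma lin_F:
  fixes c :: complex and i k :: nat and w :: "nat \<Rightarrow> complex"
  assumes "i < k"
  shows "linear (\<lambda>z. Re (c * (\<Prod>l<k. (w(i := z)) l)))"
proof -
  have e: "(\<Prod>l<k. (w(i := z)) l) = z * prod w ({..<k} - {i})" for z
  proof -
    have "(\<Prod>l<k. (w(i := z)) l) = (w(i := z)) i * prod (w(i := z)) ({..<k} - {i})"
      using assms by (intro prod.remove) auto
    also have "prod (w(i := z)) ({..<k} - {i}) = prod w ({..<k} - {i})" by (intro prod.cong) auto
    finally show ?thesis by simp
  qed
  show ?thesis unfolding e
    by (rule linearI) (simp_all add: algebra_simps scaleR_conv_of_real)
qed

lemma formula_all: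
  fixes N :: "(nat \<Rightarrow> complex) \<Rightarrow> real"
  assumes sf: "symmetric_form k N"
    and bnd: "\<And>w. (\<forall>i<k. cmod (w i) \<le> 1) \<Longrightarrow> \<bar>N w\<bar> \<le> 1"
    and xu: "\<forall>i<k. cmod (x i) = 1" and Nx: "N x = 1" and ak: "a < k" and bk: "b < k"
    and ab: "a \<noteq> b" and n1: "x a \<noteq> x b" and n2: "x a \<noteq> - x b"
  shows "N w = Re (cnj (\<Prod>i<k. x i) * (\<Prod>i<k. w i))"
proof -
  define F where "F = (\<lambda>v. Re (cnj (\<Prod>i<k. x i) * (\<Prod>i<k. v i)))"
  have l1: "\<forall>i<k. \<forall>w. linear (\<lambda>z. N (w(i := z)))"
    using sf unfolding symmetric_form_def multilinear_form_def by blast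
  have l2: "\<forall>i<k. \<forall>w. linear (\<lambda>z. F (w(i := z)))"
    unfolding F_def using lin_F by blast
  have eq: "N v = F v" if "\<forall>i<k. norm (v i) = 1" for v
    unfolding F_def using formula_unit[OF sf bnd xu Nx ak bk ab n1 n2] that by simp
  show ?thesis using ml_ext[OF l1 l2 eq] unfolding F_def by simp
qed



lemma lin_expand:
  fixes f :: "'a::euclidean_space \<Rightarrow> real"
  assumes "linear f"
  shows "f v = (\<Sum>b\<in>Basis. (v \<bullet> b) * f b)"
proof -
  have "f v = f (\<Sum>b\<in>Basis. (v \<bullet> b) *\<^sub>R b)" by (simp add: euclidean_representation)
  also have "\<dots> = (\<Sum>b\<in>Basis. f ((v \<bullet> b) *\<^sub>R b))" using assms by (simp add: linear_sum)
  also have "\<dots> = (\<Sum>b\<in>Basis. (v \<bullet> b) * f b)" using assms by (simp add: linear_scale)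
  finally show ?thesis .
qed

lemma ml_bounded:
  fixes M :: "(nat \<Rightarrow> 'a::euclidean_space) \<Rightarrow> real"
  assumes ml: "multilinear_form k M"
  shows "\<exists>C. \<forall>w. (\<forall>i<k. norm (w i) \<le> 1) \<longrightarrow> \<bar>M w\<bar> \<le> C"
proof -
  have "finite J \<Longrightarrow> \<exists>C. \<forall>w. (\<forall>i<k. i \<notin> J \<longrightarrow> w i \<in> Basis) \<longrightarrow> (\<forall>i<k. i \<in> J \<longrightarrow> norm (w i) \<le> 1)
      \<longrightarrow> \<bar>M w\<bar> \<le> C" for J
  proof (induction J rule: finite_induct)
    case empty
    define S where "S = {f::nat \<Rightarrow> 'a. \<forall>i. (i \<in> {..<k} \<longrightarrow> f i \<in> insert 0 Basis) \<and> (i \<notin> {..<k} \<longrightarrow> f i = 0)}"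
    have fS: "finite S" unfolding S_def by (intro finite_set_of_finite_funs) auto
    show ?case
    proof (intro exI allI impI)
      fix w :: "nat \<Rightarrow> 'a" assume wb: "\<forall>i<k. i \<notin> {} \<longrightarrow> w i \<in> Basis"
      let ?t = "\<lambda>i. if i < k then w i else 0"
      have tS: "?t \<in> S" unfolding S_def using wb by auto
      have "M w = M ?t" using ml unfolding multilinear_form_def by blast
      then have "\<bar>M w\<bar> = \<bar>M ?t\<bar>" by simp
      also have "\<dots> \<le> (\<Sum>f\<in>S. \<bar>M f\<bar>)" using fS tS by (intro member_le_sum) auto
      finally show "\<bar>M w\<bar> \<le> (\<Sum>f\<in>S. \<bar>M f\<bar>)" .
    qed
  next
    case (insert j J)
    obtain C where C: "\<forall>w. (\<forall>i<k. i \<notin> J \<longrightarrow> w i \<in> Basis) \<longrightarrow> (\<forall>i<k. i \<in> J \<longrightarrow> norm (w i) \<le> 1)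
      \<longrightarrow> \<bar>M w\<bar> \<le> C" using insert.IH by blast
    show ?case
    proof (cases "j < k")
      case False
      show ?thesis
      proof (intro exI allI impI)
        fix w :: "nat \<Rightarrow> 'a"
        assume "\<forall>i<k. i \<notin> insert j J \<longrightarrow> w i \<in> Basis" "\<forall>i<k. i \<in> insert j J \<longrightarrow> norm (w i) \<le> 1"
        then show "\<bar>M w\<bar> \<le> C" using C False by auto
      qed
    next
      case True
      show ?thesis
      proof (intro exI allI impI)
        fix w :: "nat \<Rightarrow> 'a"
        assume w1: "\<forall>i<k. i \<notin> insert j J \<longrightarrow> w i \<in> Basis"
          and w2: "\<forall>i<k. i \<in> insert j J \<longrightarrow> norm (w i) \<le> 1"
        have lin: "linear (\<lambda>z. M (w(j := z)))" using ml True unfolding multilinear_form_def by blast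
        have "M w = M (w(j := w j))" by simp
        also have "\<dots> = (\<Sum>b\<in>Basis. (w j \<bullet> b) * M (w(j := b)))"
          using lin_expand[OF lin, of "w j"] by simp
        finally have e: "M w = (\<Sum>b\<in>Basis. (w j \<bullet> b) * M (w(j := b)))" .
        have bb: "\<bar>(w j \<bullet> b) * M (w(j := b))\<bar> \<le> C" if b: "b \<in> Basis" for b
        proof -
          have "\<bar>M (w(j := b))\<bar> \<le> C" using C w1 w2 b insert.hyps(2) by auto
          moreover have "\<bar>w j \<bullet> b\<bar> \<le> 1" using Basis_le_norm[OF b, of "w j"] w2 True by auto
          ultimately show ?thesis by (simp add: abs_mult mult_le_one)
            (smt (verit, best) abs_ge_zero mult_left_le_one_le)
        qed
        have "\<bar>M w\<bar> \<le> (\<Sum>b\<in>Basis. \<bar>(w j \<bullet> b) * M (w(j := b))\<bar>)" unfolding e by (rule sum_abs)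
        also have "\<dots> \<le> (\<Sum>b\<in>(Basis::'a set). C)" using bb by (intro sum_mono) auto
        finally show "\<bar>M w\<bar> \<le> real DIM('a) * C" by simp
      qed
    qed
  qed
  from this[of "{..<k}"] show ?thesis by auto
qed



lemma span_pair:
  fixes x :: "nat \<Rightarrow> 'a::euclidean_space"
  assumes dim: "DIM('a) = 2" and sp: "span (x ` {..<k}) = UNIV" and k: "0 < k"
  shows "\<exists>a b. a < k \<and> b < k \<and> a \<noteq> b \<and> x a \<noteq> x b \<and> x a \<noteq> - x b"
proof (rule ccontr)
  assume "\<not> ?thesis"
  then have h: "\<forall>a<k. x a = x 0 \<or> x a = - x 0" using k by (metis minus_minus)
  have "x ` {..<k} \<subseteq> span {x 0}"
  proof
    fix v assume "v \<in> x ` {..<k}"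
    then obtain a where "a < k" "v = x a" by auto
    then show "v \<in> span {x 0}" using h by (metis span_base span_neg singletonI)
  qed
  then have "span (x ` {..<k}) \<subseteq> span {x 0}" by (metis span_mono span_span)
  then have "(UNIV :: 'a set) \<subseteq> span {x 0}" using sp by simp
  then have "dim (UNIV :: 'a set) \<le> card {x 0}" by (intro dim_le_card) auto
  then show False using dim by simp
qed

lemma sym_scale:
  assumes "symmetric_form k M"
  shows "symmetric_form k (\<lambda>w. c * M w)"
proof -
  have t: "\<forall>w. M w = M (\<lambda>i. if i < k then w i else 0)"
    and l: "\<forall>i<k. \<forall>w. linear (\<lambda>x. M (w(i := x)))"
    and p: "\<forall>p w. p permutes {..<k} \<longrightarrow> M (w \<circ> p) = M w"
    using assms unfolding symmetric_form_def multilinear_form_def by blast+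
  have l2: "linear (\<lambda>x. c * M (w(i := x)))" if "i < k" for i w
  proof -
    have "linear (\<lambda>x. M (w(i := x)))" using l that by blast
    note a = linear_add[OF this] and s = linear_scale[OF this]
    show ?thesis
      by (intro linearI) (simp_all add: a s algebra_simps)
  qed
  show ?thesis unfolding symmetric_form_def multilinear_form_def
    using t l2 p by metis
qed

lemma transport:
  fixes M :: "(nat \<Rightarrow> 'a::euclidean_space) \<Rightarrow> real"
    and \<phi> :: "'a \<Rightarrow> complex" and \<psi> :: "complex \<Rightarrow> 'a"
  assumes lp: "linear \<psi>" and np: "\<And>z. norm (\<psi> z) = cmod z" and pp: "\<And>v. \<psi> (\<phi> v) = v"
    and sf: "symmetric_form k M"
    and bnd: "\<And>w. \<forall>i<k. norm (w i) \<le> 1 \<Longrightarrow> \<bar>M w\<bar> \<le> 1"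
    and xu: "\<forall>i<k. norm (x i) = 1" and Mx: "M x = 1" and ak: "a < k" and bk: "b < k"
    and ab: "a \<noteq> b" and n1: "x a \<noteq> x b" and n2: "x a \<noteq> - x b"
  shows "M w = Re (cnj (\<Prod>i<k. \<phi> (x i)) * (\<Prod>i<k. \<phi> (w i)))"
proof -
  have t: "\<forall>w. M w = M (\<lambda>i. if i < k then w i else 0)"
    and l: "\<forall>i<k. \<forall>w. linear (\<lambda>x. M (w(i := x)))"
    and p: "\<forall>p w. p permutes {..<k} \<longrightarrow> M (w \<circ> p) = M w"
    using sf unfolding symmetric_form_def multilinear_form_def by blast+
  define N where "N = (\<lambda>w. M (\<psi> \<circ> w))"
  have p0: "\<psi> 0 = 0" using lp by (rule linear_0)
  have nt: "N w = N (\<lambda>i. if i < k then w i else 0)" for w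
  proof -
    have "\<psi> \<circ> (\<lambda>i. if i < k then w i else 0) = (\<lambda>i. if i < k then (\<psi> \<circ> w) i else 0)"
      using p0 by (auto simp: fun_eq_iff)
    then show ?thesis unfolding N_def using t by metis
  qed
  have nl: "linear (\<lambda>z. N (w(i := z)))" if "i < k" for i w
  proof -
    have e: "(\<lambda>z. N (w(i := z))) = (\<lambda>v. M ((\<psi> \<circ> w)(i := v))) \<circ> \<psi>"
      unfolding N_def by (auto simp: fun_eq_iff fun_upd_comp)
    show ?thesis unfolding e using l that lp by (intro linear_compose) auto
  qed
  have np': "N (w \<circ> q) = N w" if "q permutes {..<k}" for q w
    unfolding N_def using p that by (metis comp_assoc)
  have sfN: "symmetric_form k N" unfolding symmetric_form_def multilinear_form_def
    using nt nl np' by blast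
  have bN: "\<bar>N w\<bar> \<le> 1" if "\<forall>i<k. cmod (w i) \<le> 1" for w
    unfolding N_def using that np by (intro bnd) auto
  define x' where "x' = \<phi> \<circ> x"
  have nphi: "cmod (\<phi> v) = norm v" for v using np[of "\<phi> v"] pp by simp
  have x'u: "\<forall>i<k. cmod (x' i) = 1" unfolding x'_def using xu nphi by simp
  have ppx: "\<psi> \<circ> (\<phi> \<circ> w) = w" for w using pp by (auto simp: fun_eq_iff)
  have Nx': "N x' = 1" unfolding N_def x'_def ppx using Mx .
  have m1: "x' a \<noteq> x' b" unfolding x'_def using n1 pp by (metis comp_apply)
  have m2: "x' a \<noteq> - x' b" unfolding x'_def using n2 pp linear_neg[OF lp] by (metis comp_apply)
  have "M w = N (\<phi> \<circ> w)" unfolding N_def ppx ..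
  also have "\<dots> = Re (cnj (\<Prod>i<k. x' i) * (\<Prod>i<k. (\<phi> \<circ> w) i))"
    by (rule formula_all[OF sfN bN x'u Nx' ak bk ab m1 m2])
  finally show ?thesis unfolding x'_def by simp
qed



lemma uniq:
  fixes M1 M2 :: "(nat \<Rightarrow> 'a::euclidean_space) \<Rightarrow> real"
  assumes dim: "DIM('a) = 2" and sp: "span (x ` {..<k}) = UNIV" and k: "0 < k"
    and xu: "\<forall>i<k. norm (x i) = 1"
    and sf1: "symmetric_form k M1" and bnd1: "\<And>w. \<forall>i<k. norm (w i) \<le> 1 \<Longrightarrow> \<bar>M1 w\<bar> \<le> 1" and M1x: "M1 x = 1"
    and sf2: "symmetric_form k M2" and bnd2: "\<And>w. \<forall>i<k. norm (w i) \<le> 1 \<Longrightarrow> \<bar>M2 w\<bar> \<le> 1" and M2x: "M2 x = 1"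
  shows "M1 w = M2 w"
proof -
  obtain b1 b2 :: 'a where B: "Basis = {b1, b2}" and b12: "b1 \<noteq> b2"
    using dim card_2_iff by metis
  have ib: "b1 \<bullet> b1 = 1" "b2 \<bullet> b2 = 1" "b1 \<bullet> b2 = 0" "b2 \<bullet> b1 = 0"
  proof -
    have "b1 \<in> Basis" "b2 \<in> Basis" using B by auto
    then show "b1 \<bullet> b1 = 1" "b2 \<bullet> b2 = 1" "b1 \<bullet> b2 = 0" "b2 \<bullet> b1 = 0"
      using b12 by (simp_all add: inner_Basis)
  qed
  define \<psi> where "\<psi> = (\<lambda>z::complex. Re z *\<^sub>R b1 + Im z *\<^sub>R b2)"
  define \<phi> where "\<phi> = (\<lambda>v::'a. Complex (v \<bullet> b1) (v \<bullet> b2))"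
  have lp: "linear \<psi>" unfolding \<psi>_def
    by (intro linearI) (simp_all add: algebra_simps scaleR_add_left)
  have np: "norm (\<psi> z) = cmod z" for z
  proof -
    have "\<psi> z \<bullet> \<psi> z = (Re z)\<^sup>2 + (Im z)\<^sup>2" unfolding \<psi>_def
      by (simp add: inner_add_left inner_add_right ib power2_eq_square)
    moreover have "norm (\<psi> z) = sqrt (\<psi> z \<bullet> \<psi> z)" by (rule norm_eq_sqrt_inner)
    moreover have "cmod z = sqrt ((Re z)\<^sup>2 + (Im z)\<^sup>2)" by (rule cmod_def)
    ultimately show ?thesis by simp
  qed
  have pp: "\<psi> (\<phi> v) = v" for v
  proof -
    have "v = (\<Sum>b\<in>Basis. (v \<bullet> b) *\<^sub>R b)" by (simp add: euclidean_representation)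
    also have "\<dots> = (v \<bullet> b1) *\<^sub>R b1 + (v \<bullet> b2) *\<^sub>R b2" unfolding B using b12 by simp
    finally show ?thesis unfolding \<psi>_def \<phi>_def by simp
  qed
  obtain a b where ab: "a < k" "b < k" "a \<noteq> b" "x a \<noteq> x b" "x a \<noteq> - x b"
    using span_pair[OF dim sp k] by blast
  show ?thesis
    using transport[OF lp np pp sf1 bnd1 xu M1x ab, of w] transport[OF lp np pp sf2 bnd2 xu M2x ab, of w]
    by simp
qed

lemma le_form_norm:
  fixes M :: "(nat \<Rightarrow> 'a::euclidean_space) \<Rightarrow> real"
  assumes "symmetric_form k M" "\<forall>i<k. norm (w i) \<le> 1"
  shows "\<bar>M w\<bar> \<le> form_norm k M"
proof -
  have "multilinear_form k M" using assms(1) unfolding symmetric_form_def by blast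
  then obtain C where C: "\<forall>w. (\<forall>i<k. norm (w i) \<le> 1) \<longrightarrow> \<bar>M w\<bar> \<le> C" using ml_bounded by blast
  have "bdd_above {\<bar>M w\<bar> | w. \<forall>i<k. norm (w i) \<le> 1}"
    using C by (auto intro!: bdd_aboveI[where M = C])
  then show ?thesis unfolding form_norm_def using assms(2) by (intro cSup_upper) auto
qed

theorem proposition1p5:
  fixes T :: "(nat \<Rightarrow> 'a::euclidean_space) \<Rightarrow> real"
    and x :: "nat \<Rightarrow> 'a"
    and k :: nat
  assumes "DIM('a) = 2"
    and "k \<ge> 2"
    and "T \<in> Ls k"
    and "form_norm k T = 1"
    and "\<forall>i<k. norm (x i) = 1"
    and "attains_norm_at k T x"
    and "span (x ` {..<k}) = UNIV"
  shows "exposed_point_Ls_ball k T"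
proof -
  note dim = assms(1) and sp = assms(7) and xu = assms(5)
  have k0: "0 < k" using assms(2) by simp
  have sT: "symmetric_form k T" using assms(3) unfolding Ls_def by simp
  define \<sigma> where "\<sigma> = T x"
  have as: "\<bar>\<sigma>\<bar> = 1" using assms(4,6) unfolding attains_norm_at_def \<sigma>_def by simp
  have ss: "\<sigma> * \<sigma> = 1" using as by (metis abs_mult_self_eq mult_1_left)
  have xle: "\<forall>i<k. norm (x i) \<le> 1" using xu by simp
  define \<Phi> where "\<Phi> = (\<lambda>S :: (nat \<Rightarrow> 'a) \<Rightarrow> real. \<sigma> * S x)"
  have cl: "cont_lin_functional k \<Phi>"
    unfolding cont_lin_functional_def
  proof (intro conjI)
    show "\<forall>S\<in>Ls k. \<forall>R\<in>Ls k. \<forall>a b. \<Phi> (\<lambda>w. a * S w + b * R w) = a * \<Phi> S + b * \<Phi> R"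
      unfolding \<Phi>_def by (simp add: algebra_simps)
    show "\<exists>C. \<forall>S\<in>Ls k. \<bar>\<Phi> S\<bar> \<le> C * form_norm k S"
    proof (intro exI ballI)
      fix S :: "(nat \<Rightarrow> 'a) \<Rightarrow> real" assume "S \<in> Ls k"
      then have "symmetric_form k S" unfolding Ls_def by simp
      then have "\<bar>S x\<bar> \<le> form_norm k S" using xle by (rule le_form_norm)
      then show "\<bar>\<Phi> S\<bar> \<le> 1 * form_norm k S" unfolding \<Phi>_def using as by (simp add: abs_mult)
    qed
  qed
  have TB: "T \<in> Ls_ball k" unfolding Ls_ball_def using assms(3,4) by simp
  have strict: "\<Phi> S < \<Phi> T" if SB: "S \<in> Ls_ball k" and ST: "S \<noteq> T" for S
  proof (rule ccontr)
    assume "\<not> \<Phi> S < \<Phi> T"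
    then have ge: "\<sigma> * S x \<ge> 1" unfolding \<Phi>_def \<sigma>_def using ss \<sigma>_def by simp
    have sS: "symmetric_form k S" and nS: "form_norm k S \<le> 1" using SB unfolding Ls_ball_def Ls_def by auto
    have bS: "\<bar>S w\<bar> \<le> 1" if "\<forall>i<k. norm (w i) \<le> 1" for w
      using le_form_norm[OF sS that] nS by simp
    have bT: "\<bar>T w\<bar> \<le> 1" if "\<forall>i<k. norm (w i) \<le> 1" for w
      using le_form_norm[OF sT that] assms(4) by simp
    have "\<bar>S x\<bar> \<le> 1" using bS xle by blast
    then have "\<bar>\<sigma> * S x\<bar> \<le> 1" using as by (simp add: abs_mult)
    then have S1: "\<sigma> * S x = 1" using ge by linarith
    have bS': "\<bar>\<sigma> * S w\<bar> \<le> 1" if "\<forall>i<k. norm (w i) \<le> 1" for w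
      using bS[OF that] as by (simp add: abs_mult)
    have bT': "\<bar>\<sigma> * T w\<bar> \<le> 1" if "\<forall>i<k. norm (w i) \<le> 1" for w
      using bT[OF that] as by (simp add: abs_mult)
    have T1: "\<sigma> * T x = 1" using ss unfolding \<sigma>_def .
    have e: "\<sigma> * S w = \<sigma> * T w" for w
      using uniq[OF dim sp k0 xu sym_scale[OF sS] bS' S1 sym_scale[OF sT] bT' T1] .
    have "S = T"
    proof
      fix w show "S w = T w" using e[of w] as by auto
    qed
    then show False using ST by simp
  qed
  show ?thesis unfolding exposed_point_Ls_ball_def using TB cl strict by blast
qed


end
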